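(* Let $G$ be a $3$-connected $\Delta$-regular graph. If $\alpha$ and $\beta$ are unfrozen $(\Delta+1)$-colourings of $G$, then $\alpha\sim\beta$.
   Context: A $(\Delta+1)$-colouring is an $L$-colouring for the list-assignment $L(v)=\{1,\ldots,\Delta+1\}$ for all $v$, i.e. a proper colouring with colours in $\{1,\ldots,\Delta+1\}$. A vertex $v$ is frozen under a colouring $\varphi$ if every colour of $L(v)\setminus\{\varphi(v)\}$ appears on a neighbour of $v$; a colouring is unfrozen if at least one vertex is not frozen. $\alpha\sim\beta$ means $\alpha$ can be transformed into $\beta$ by a sequence of single-vertex recolouring steps, each keeping the colouring a proper $(\Delta+1)$-colouring. *)

theory Defs
  imports Main
begin

definition simple_graph :: "'a set \<Rightarrow> ('a \<Rightarrow> 'a \<Rightarrow> bool) \<Rightarrow> bool" where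
  "simple_graph V E \<longleftrightarrow> finite V \<and> (\<forall>u v. E u v \<longrightarrow> u \<in> V \<and> v \<in> V)
     \<and> (\<forall>u v. E u v \<longrightarrow> E v u) \<and> (\<forall>v. \<not> E v v)"

definition nbrs :: "'a set \<Rightarrow> ('a \<Rightarrow> 'a \<Rightarrow> bool) \<Rightarrow> 'a \<Rightarrow> 'a set" where
  "nbrs V E v = {u \<in> V. E v u}"

definition regular :: "'a set \<Rightarrow> ('a \<Rightarrow> 'a \<Rightarrow> bool) \<Rightarrow> nat \<Rightarrow> bool" where
  "regular V E d \<longleftrightarrow> (\<forall>v \<in> V. card (nbrs V E v) = d)"

definition connected_induced :: "'a set \<Rightarrow> ('a \<Rightarrow> 'a \<Rightarrow> bool) \<Rightarrow> bool" where
  "connected_induced S E \<longleftrightarrow>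
     (\<forall>u \<in> S. \<forall>v \<in> S. (\<lambda>x y. x \<in> S \<and> y \<in> S \<and> E x y)\<^sup>*\<^sup>* u v)"

definition k_connected :: "'a set \<Rightarrow> ('a \<Rightarrow> 'a \<Rightarrow> bool) \<Rightarrow> nat \<Rightarrow> bool" where
  "k_connected V E k \<longleftrightarrow> card V > k \<and>
     (\<forall>X. X \<subseteq> V \<and> card X < k \<longrightarrow> connected_induced (V - X) E)"

definition proper_colouring :: "'a set \<Rightarrow> ('a \<Rightarrow> 'a \<Rightarrow> bool) \<Rightarrow> nat \<Rightarrow> ('a \<Rightarrow> nat) \<Rightarrow> bool" where
  "proper_colouring V E k \<phi> \<longleftrightarrow> (\<forall>v \<in> V. \<phi> v \<in> {1..k}) \<and> (\<forall>u v. E u v \<longrightarrow> \<phi> u \<noteq> \<phi> v)"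

definition frozen :: "'a set \<Rightarrow> ('a \<Rightarrow> 'a \<Rightarrow> bool) \<Rightarrow> nat \<Rightarrow> ('a \<Rightarrow> nat) \<Rightarrow> 'a \<Rightarrow> bool" where
  "frozen V E k \<phi> v \<longleftrightarrow> (\<forall>c \<in> {1..k} - {\<phi> v}. \<exists>u \<in> nbrs V E v. \<phi> u = c)"

definition unfrozen :: "'a set \<Rightarrow> ('a \<Rightarrow> 'a \<Rightarrow> bool) \<Rightarrow> nat \<Rightarrow> ('a \<Rightarrow> nat) \<Rightarrow> bool" where
  "unfrozen V E k \<phi> \<longleftrightarrow> (\<exists>v \<in> V. \<not> frozen V E k \<phi> v)"

definition recolour_step :: "'a set \<Rightarrow> ('a \<Rightarrow> 'a \<Rightarrow> bool) \<Rightarrow> nat \<Rightarrow> ('a \<Rightarrow> nat) \<Rightarrow> ('a \<Rightarrow> nat) \<Rightarrow> bool" where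
  "recolour_step V E k \<alpha> \<beta> \<longleftrightarrow> proper_colouring V E k \<alpha> \<and> proper_colouring V E k \<beta> \<and>
     (\<exists>v \<in> V. \<forall>u \<in> V. u \<noteq> v \<longrightarrow> \<alpha> u = \<beta> u)"

definition reconf_equiv :: "'a set \<Rightarrow> ('a \<Rightarrow> 'a \<Rightarrow> bool) \<Rightarrow> nat \<Rightarrow> ('a \<Rightarrow> nat) \<Rightarrow> ('a \<Rightarrow> nat) \<Rightarrow> bool" where
  "reconf_equiv V E k \<alpha> \<beta> \<longleftrightarrow> (recolour_step V E k)\<^sup>*\<^sup>* \<alpha> \<beta>"

end

theory Submission
  imports Defs
begin


definition nb :: "'a set \<Rightarrow> ('a \<Rightarrow> 'a \<Rightarrow> bool) \<Rightarrow> 'a \<Rightarrow> 'a set" where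
  "nb U E u = {w\<in>U. E u w}"

definition lcol :: "'a set \<Rightarrow> ('a \<Rightarrow> 'a \<Rightarrow> bool) \<Rightarrow> ('a \<Rightarrow> nat set) \<Rightarrow> ('a \<Rightarrow> nat) \<Rightarrow> bool" where
  "lcol U E L \<phi> \<longleftrightarrow> (\<forall>u\<in>U. \<phi> u \<in> L u) \<and> (\<forall>x\<in>U. \<forall>y\<in>U. E x y \<longrightarrow> \<phi> x \<noteq> \<phi> y)"

definition lstep :: "'a set \<Rightarrow> ('a \<Rightarrow> 'a \<Rightarrow> bool) \<Rightarrow> ('a \<Rightarrow> nat set) \<Rightarrow> ('a \<Rightarrow> nat) \<Rightarrow> ('a \<Rightarrow> nat) \<Rightarrow> bool" where
  "lstep U E L \<phi> \<psi> \<longleftrightarrow> lcol U E L \<phi> \<and> lcol U E L \<psi> \<and> (\<exists>v. \<forall>u\<in>U. u \<noteq> v \<longrightarrow> \<phi> u = \<psi> u)"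

definition slackc :: "'a set \<Rightarrow> ('a \<Rightarrow> 'a \<Rightarrow> bool) \<Rightarrow> ('a \<Rightarrow> nat set) \<Rightarrow> bool" where
  "slackc U E L \<longleftrightarrow> finite U \<and> (\<forall>u\<in>U. card (nb U E u) + 1 \<le> card (L u)) \<and>
     (\<forall>u\<in>U. \<exists>s\<in>U. (\<lambda>x y. x \<in> U \<and> y \<in> U \<and> E x y)\<^sup>*\<^sup>* u s \<and> card (nb U E s) + 2 \<le> card (L s))"

lemma nb_mono: "finite U \<Longrightarrow> card (nb (U - {s}) E u) \<le> card (nb U E u)"
  unfolding nb_def by (rule card_mono) auto

lemma nb_remove: "finite U \<Longrightarrow> s \<in> U \<Longrightarrow> E u s \<Longrightarrow> card (nb (U - {s}) E u) + 1 = card (nb U E u)"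
proof -
  assume a: "finite U" "s \<in> U" "E u s"
  have "nb (U - {s}) E u = nb U E u - {s}" unfolding nb_def by auto
  moreover have "s \<in> nb U E u" "finite (nb U E u)" using a unfolding nb_def by auto
  ultimately show ?thesis
    by (metis One_nat_def Suc_pred add.commute add_Suc_right card_Diff_singleton card_gt_0_iff empty_iff plus_1_eq_Suc)
qed

lemma lcol_mono: "U' \<subseteq> U \<Longrightarrow> lcol U E L \<phi> \<Longrightarrow> lcol U' E L \<phi>"
  unfolding lcol_def by blast

lemma slack_remove:
  assumes sc: "slackc U E L" and sU: "s \<in> U"
  shows "slackc (U - {s}) E L"
proof -
  have fin: "finite U" using sc unfolding slackc_def by simp
  have tight: "\<forall>u\<in>U. card (nb U E u) + 1 \<le> card (L u)" using sc unfolding slackc_def by simp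
  let ?R = "\<lambda>x y. x \<in> U \<and> y \<in> U \<and> E x y"
  let ?R' = "\<lambda>x y. x \<in> U - {s} \<and> y \<in> U - {s} \<and> E x y"
  have key: "?R\<^sup>*\<^sup>* u t \<Longrightarrow> u \<in> U - {s} \<Longrightarrow> card (nb U E t) + 2 \<le> card (L t) \<Longrightarrow>
     \<exists>s'\<in>U-{s}. ?R'\<^sup>*\<^sup>* u s' \<and> card (nb (U - {s}) E s') + 2 \<le> card (L s')" for u t
  proof (induction rule: converse_rtranclp_induct)
    case base
    then show ?case using nb_mono[OF fin, of s E t] by (intro bexI[of _ t]) auto
  next
    case (step y z)
    show ?case
    proof (cases "z = s")
      case True
      then have "E y s" "y \<in> U" using step by auto
      then have "card (nb (U - {s}) E y) + 2 \<le> card (L y)"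
        using nb_remove[OF fin sU, of E y] tight by fastforce
      then show ?thesis using step by auto
    next
      case False
      then have "z \<in> U - {s}" using step by auto
      then obtain s' where s': "s' \<in> U - {s}" "?R'\<^sup>*\<^sup>* z s'" "card (nb (U - {s}) E s') + 2 \<le> card (L s')"
        using step by blast
      have "?R' y z" using step \<open>z \<in> U - {s}\<close> by auto
      then have "?R'\<^sup>*\<^sup>* y s'" using s'(2) by (rule converse_rtranclp_into_rtranclp)
      then show ?thesis using s' by blast
    qed
  qed
  show ?thesis
    unfolding slackc_def
  proof (intro conjI ballI)
    show "finite (U - {s})" using fin by simp
  next
    fix u assume "u \<in> U - {s}"
    then show "card (nb (U - {s}) E u) + 1 \<le> card (L u)" using tight nb_mono[OF fin, of s E u] by force
  next
    fix u assume u: "u \<in> U - {s}"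
    then obtain t where "t \<in> U" "?R\<^sup>*\<^sup>* u t" "card (nb U E t) + 2 \<le> card (L t)"
      using sc unfolding slackc_def by blast
    then show "\<exists>s'\<in>U-{s}. ?R'\<^sup>*\<^sup>* u s' \<and> card (nb (U - {s}) E s') + 2 \<le> card (L s')"
      using key u by blast
  qed
qed

lemma lift_one:
  assumes sym: "\<forall>a b. E a b \<longrightarrow> E b a" and irr: "\<forall>a. \<not> E a a"
    and fin: "finite U" and sU: "s \<in> U" and sl: "card (nb U E s) + 2 \<le> card (L s)"
    and st: "lstep (U - {s}) E L m \<delta>" and m': "lcol U E L m'" and agree: "\<forall>u\<in>U-{s}. m' u = m u"
  shows "\<exists>\<delta>'. lcol U E L \<delta>' \<and> (\<forall>u\<in>U-{s}. \<delta>' u = \<delta> u) \<and> (lstep U E L)\<^sup>*\<^sup>* m' \<delta>'"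
proof -
  obtain v where v: "\<forall>u\<in>U-{s}. u \<noteq> v \<longrightarrow> m u = \<delta> u" using st unfolding lstep_def by blast
  have d: "lcol (U - {s}) E L \<delta>" using st unfolding lstep_def by blast
  show ?thesis
  proof (cases "\<forall>u\<in>U-{s}. E s u \<longrightarrow> \<delta> u \<noteq> m' s")
    case True
    define \<delta>' where "\<delta>' = \<delta>(s := m' s)"
    have c: "lcol U E L \<delta>'"
      unfolding lcol_def
    proof (intro conjI ballI impI)
      fix u assume "u \<in> U" then show "\<delta>' u \<in> L u"
        using d m' unfolding lcol_def \<delta>'_def by auto
    next
      fix x y assume xy: "x \<in> U" "y \<in> U" "E x y"
      show "\<delta>' x \<noteq> \<delta>' y"
      proof (cases "x = s")
        case True
        then have "y \<noteq> s" using irr xy by auto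
        then show ?thesis using True \<open>\<forall>u\<in>U-{s}. E s u \<longrightarrow> \<delta> u \<noteq> m' s\<close> xy unfolding \<delta>'_def by auto
      next
        case False
        show ?thesis
        proof (cases "y = s")
          case True
          then have "E s x" using sym xy by blast
          then show ?thesis using True False \<open>\<forall>u\<in>U-{s}. E s u \<longrightarrow> \<delta> u \<noteq> m' s\<close> xy unfolding \<delta>'_def by auto
        next
          case False
          then show ?thesis using \<open>x \<noteq> s\<close> d xy unfolding lcol_def \<delta>'_def by auto
        qed
      qed
    qed
    have "lstep U E L m' \<delta>'"
      unfolding lstep_def using c m' v agree unfolding \<delta>'_def by (intro conjI exI[of _ v]) auto
    then have "(lstep U E L)\<^sup>*\<^sup>* m' \<delta>'" by auto
    then show ?thesis using c by (intro exI[of _ \<delta>'] conjI) (auto simp: \<delta>'_def)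
  next
    case False
    then obtain u where u: "u \<in> U - {s}" "E s u" "\<delta> u = m' s" by blast
    have "m' u \<noteq> m' s" using m' u sU unfolding lcol_def by (metis DiffD1 sym)
    then have "u = v" using v agree u by metis
    let ?B = "m' ` nb U E s \<union> {m' s}"
    have finn: "finite (nb U E s)" using fin unfolding nb_def by auto
    have "card ?B \<le> card (m' ` nb U E s) + 1" by (simp add: card_insert_le_m1 card_Un_le)
    also have "\<dots> \<le> card (nb U E s) + 1" using card_image_le[OF finn] by simp
    finally have cB: "card ?B < card (L s)" using sl by simp
    then have "finite (L s)" by (metis card.infinite not_less_zero)
    have "\<not> L s \<subseteq> ?B"
    proof
      assume "L s \<subseteq> ?B"
      then have "card (L s) \<le> card ?B" using finn by (intro card_mono) auto
      then show False using cB by simp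
    qed
    then obtain c where c: "c \<in> L s" "c \<notin> ?B" by blast
    define m'' where "m'' = m'(s := c)"
    define \<delta>' where "\<delta>' = \<delta>(s := c)"
    have cm: "lcol U E L m''"
      unfolding lcol_def
    proof (intro conjI ballI impI)
      fix w assume "w \<in> U" then show "m'' w \<in> L w"
        using c m' unfolding lcol_def m''_def by auto
    next
      fix x y assume xy: "x \<in> U" "y \<in> U" "E x y"
      have "x \<noteq> y" using irr xy by auto
      show "m'' x \<noteq> m'' y"
      proof (cases "x = s")
        case True then show ?thesis using xy c \<open>x \<noteq> y\<close> unfolding m''_def nb_def by auto
      next
        case False
        show ?thesis
        proof (cases "y = s")
          case True
          then have "E s x" using sym xy by blast
          then show ?thesis using True False xy c unfolding m''_def nb_def by auto
        next
          case False
          then show ?thesis using \<open>x \<noteq> s\<close> m' xy unfolding lcol_def m''_def by auto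
        qed
      qed
    qed
    have cd: "lcol U E L \<delta>'"
      unfolding lcol_def
    proof (intro conjI ballI impI)
      fix w assume "w \<in> U" then show "\<delta>' w \<in> L w"
        using c d unfolding lcol_def \<delta>'_def by auto
    next
      fix x y assume xy: "x \<in> U" "y \<in> U" "E x y"
      have "x \<noteq> y" using irr xy by auto
      have nbv: "\<And>w. w \<in> U - {s} \<Longrightarrow> E s w \<Longrightarrow> \<delta> w \<noteq> c"
      proof -
        fix w assume w: "w \<in> U - {s}" "E s w"
        show "\<delta> w \<noteq> c"
        proof (cases "w = v")
          case True then show ?thesis using u \<open>u = v\<close> c by auto
        next
          case False
          then have "\<delta> w = m' w" using v agree w by metis
          then show ?thesis using c w unfolding nb_def by auto
        qed
      qed
      show "\<delta>' x \<noteq> \<delta>' y"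
      proof (cases "x = s")
        case True then show ?thesis using xy nbv \<open>x \<noteq> y\<close> unfolding \<delta>'_def by auto
      next
        case False
        show ?thesis
        proof (cases "y = s")
          case True
          then have "E s x" using sym xy by blast
          then show ?thesis using True False xy nbv unfolding \<delta>'_def by fastforce
        next
          case False
          then show ?thesis using \<open>x \<noteq> s\<close> d xy unfolding lcol_def \<delta>'_def by auto
        qed
      qed
    qed
    have s1: "lstep U E L m' m''"
      unfolding lstep_def using cm m' by (intro conjI exI[of _ s]) (auto simp: m''_def)
    have s2: "lstep U E L m'' \<delta>'"
      unfolding lstep_def using cm cd v agree
      by (intro conjI exI[of _ v]) (auto simp: m''_def \<delta>'_def)
    have "(lstep U E L)\<^sup>*\<^sup>* m' \<delta>'" using s1 s2 by auto
    then show ?thesis using cd by (intro exI[of _ \<delta>'] conjI) (auto simp: \<delta>'_def)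
  qed
qed

lemma lift_many:
  assumes sym: "\<forall>a b. E a b \<longrightarrow> E b a" and irr: "\<forall>a. \<not> E a a"
    and fin: "finite U" and sU: "s \<in> U" and sl: "card (nb U E s) + 2 \<le> card (L s)"
  shows "(lstep (U - {s}) E L)\<^sup>*\<^sup>* \<gamma> \<delta> \<Longrightarrow> lcol U E L \<gamma>' \<Longrightarrow> \<forall>u\<in>U-{s}. \<gamma>' u = \<gamma> u \<Longrightarrow>
     \<exists>\<delta>'. lcol U E L \<delta>' \<and> (\<forall>u\<in>U-{s}. \<delta>' u = \<delta> u) \<and> (lstep U E L)\<^sup>*\<^sup>* \<gamma>' \<delta>'"
proof (induction rule: rtranclp_induct)
  case base
  then show ?case by auto
next
  case (step y z)
  then obtain m' where m': "lcol U E L m'" "\<forall>u\<in>U-{s}. m' u = y u" "(lstep U E L)\<^sup>*\<^sup>* \<gamma>' m'" by blast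
  obtain \<delta>' where "lcol U E L \<delta>'" "\<forall>u\<in>U-{s}. \<delta>' u = z u" "(lstep U E L)\<^sup>*\<^sup>* m' \<delta>'"
    using lift_one[where L=L, OF sym irr fin sU sl step(2) m'(1,2)] by blast
  then show ?case using m'(3) by (meson rtranclp_trans)
qed

lemma slack_main:
  assumes sym: "\<forall>a b. E a b \<longrightarrow> E b a" and irr: "\<forall>a. \<not> E a a"
  shows "slackc U E L \<Longrightarrow> lcol U E L \<phi> \<Longrightarrow> lcol U E L \<psi> \<Longrightarrow> (lstep U E L)\<^sup>*\<^sup>* \<phi> \<psi>"
proof (induction "card U" arbitrary: U \<phi> \<psi> rule: less_induct)
  case less
  show ?case
  proof (cases "U = {}")
    case True
    then have "lstep U E L \<phi> \<psi>" using less unfolding lstep_def by auto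
    then show ?thesis by auto
  next
    case False
    then obtain u where "u \<in> U" by blast
    then obtain s where s: "s \<in> U" "card (nb U E s) + 2 \<le> card (L s)"
      using less(2) unfolding slackc_def by blast
    have fin: "finite U" using less(2) unfolding slackc_def by blast
    have lt: "card (U - {s}) < card U" using fin s(1) by (meson card_Diff1_less)
    have "(lstep (U - {s}) E L)\<^sup>*\<^sup>* \<phi> \<psi>"
      using less(1)[OF lt slack_remove[OF less(2) s(1)]] lcol_mono[of "U - {s}" U] less(3,4) by blast
    then obtain \<delta>' where d: "lcol U E L \<delta>'" "\<forall>u\<in>U-{s}. \<delta>' u = \<psi> u" "(lstep U E L)\<^sup>*\<^sup>* \<phi> \<delta>'"
      using lift_many[where L=L, OF sym irr fin s(1) s(2)] less(3) by blast
    have "lstep U E L \<delta>' \<psi>" unfolding lstep_def using d less(4) by (intro conjI exI[of _ s]) auto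
    then show ?thesis using d(3) by auto
  qed
qed



definition vpair :: "'a set \<Rightarrow> ('a \<Rightarrow> 'a \<Rightarrow> bool) \<Rightarrow> 'a \<Rightarrow> 'a \<Rightarrow> bool" where
  "vpair V E x y \<longleftrightarrow> x \<in> V \<and> y \<in> V \<and> x \<noteq> y \<and> \<not> E x y \<and> (\<exists>z\<in>V. E z x \<and> E z y)"

lemma rtranclp_map:
  "R\<^sup>*\<^sup>* a b \<Longrightarrow> (\<And>c d. R c d \<Longrightarrow> S (h c) (h d)) \<Longrightarrow> S\<^sup>*\<^sup>* (h a) (h b)"
  by (induction rule: rtranclp_induct) (auto intro: rtranclp.rtrancl_into_rtrancl)

lemma ext_col:
  assumes sg: "simple_graph V E" and reg: "regular V E \<Delta>"
  shows "finite W \<Longrightarrow> W \<subseteq> V \<Longrightarrow> (\<forall>u\<in>V-W. \<phi>0 u \<in> {1..\<Delta>+1}) \<Longrightarrow>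
    (\<forall>a\<in>V-W. \<forall>b\<in>V-W. E a b \<longrightarrow> \<phi>0 a \<noteq> \<phi>0 b) \<Longrightarrow>
    \<exists>\<phi>. proper_colouring V E (\<Delta>+1) \<phi> \<and> (\<forall>u\<in>V-W. \<phi> u = \<phi>0 u)"
proof (induction W arbitrary: \<phi>0 rule: finite_induct)
  case empty
  then show ?case using sg unfolding proper_colouring_def simple_graph_def by (intro exI[of _ \<phi>0]) auto
next
  case (insert w W)
  have fV: "finite V" and sym: "\<forall>a b. E a b \<longrightarrow> E b a" and irr: "\<forall>a. \<not> E a a"
    and inV: "\<forall>u v. E u v \<longrightarrow> u \<in> V \<and> v \<in> V"
    using sg unfolding simple_graph_def by auto
  have wV: "w \<in> V" using insert by auto
  let ?B = "\<phi>0 ` (nbrs V E w \<inter> (V - insert w W))"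
  have "card ?B \<le> card (nbrs V E w \<inter> (V - insert w W))" by (rule card_image_le) (use fV in auto)
  also have "\<dots> \<le> card (nbrs V E w)" by (rule card_mono) (use fV in \<open>auto simp: nbrs_def\<close>)
  also have "\<dots> = \<Delta>" using reg wV unfolding regular_def by auto
  finally have cB: "card ?B < card {1..\<Delta>+1}" by simp
  have "\<not> {1..\<Delta>+1} \<subseteq> ?B"
  proof
    assume "{1..\<Delta>+1} \<subseteq> ?B"
    then have "card {1..\<Delta>+1} \<le> card ?B" using fV by (intro card_mono) auto
    then show False using cB by simp
  qed
  then obtain c where c: "c \<in> {1..\<Delta>+1}" "c \<notin> ?B" by blast
  define \<phi>1 where "\<phi>1 = \<phi>0(w := c)"
  have h1: "\<forall>u\<in>V-W. \<phi>1 u \<in> {1..\<Delta>+1}" using insert.prems(2) c unfolding \<phi>1_def by auto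
  have h2: "\<forall>a\<in>V-W. \<forall>b\<in>V-W. E a b \<longrightarrow> \<phi>1 a \<noteq> \<phi>1 b"
  proof (intro ballI impI)
    fix a b assume ab: "a \<in> V - W" "b \<in> V - W" "E a b"
    show "\<phi>1 a \<noteq> \<phi>1 b"
    proof (cases "a = w")
      case True
      then have "b \<noteq> w" using irr ab by auto
      then have "\<phi>0 b \<in> ?B" using ab True unfolding nbrs_def by auto
      then show ?thesis using True \<open>b \<noteq> w\<close> c unfolding \<phi>1_def by auto
    next
      case False
      show ?thesis
      proof (cases "b = w")
        case True
        then have "\<phi>0 a \<in> ?B" using ab False sym unfolding nbrs_def by auto
        then show ?thesis using True False c unfolding \<phi>1_def by auto
      next
        case False
        then show ?thesis using \<open>a \<noteq> w\<close> ab insert.prems(3) unfolding \<phi>1_def by auto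
      qed
    qed
  qed
  have WV: "W \<subseteq> V" using insert.prems(1) by auto
  obtain \<phi> where \<phi>: "proper_colouring V E (\<Delta>+1) \<phi>" "\<forall>u\<in>V-W. \<phi> u = \<phi>1 u"
    using insert.IH[OF WV h1 h2] by blast
  have "\<forall>u\<in>V - insert w W. \<phi> u = \<phi>0 u"
  proof
    fix u assume "u \<in> V - insert w W"
    then have "u \<in> V - W" "u \<noteq> w" by auto
    then show "\<phi> u = \<phi>0 u" using \<phi>(2) unfolding \<phi>1_def by simp
  qed
  then show ?case using \<phi>(1) by blast
qed

lemma ext_F:
  assumes sg: "simple_graph V E" and reg: "regular V E \<Delta>" and F: "F \<subseteq> V"
    and r: "\<forall>u\<in>F. \<phi>0 u \<in> {1..\<Delta>+1}" and p: "\<forall>a\<in>F. \<forall>b\<in>F. E a b \<longrightarrow> \<phi>0 a \<noteq> \<phi>0 b"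
  shows "\<exists>\<phi>. proper_colouring V E (\<Delta>+1) \<phi> \<and> (\<forall>u\<in>F. \<phi> u = \<phi>0 u)"
proof -
  have fV: "finite V" using sg unfolding simple_graph_def by auto
  have e: "V - (V - F) = F" using F by auto
  have w: "finite (V - F)" "V - F \<subseteq> V" using fV by auto
  have r': "\<forall>u\<in>V - (V - F). \<phi>0 u \<in> {1..\<Delta>+1}" using r unfolding e .
  have p': "\<forall>a\<in>V - (V - F). \<forall>b\<in>V - (V - F). E a b \<longrightarrow> \<phi>0 a \<noteq> \<phi>0 b" using p unfolding e .
  show ?thesis using ext_col[OF sg reg w r' p'] unfolding e .
qed

lemma K_conn:
  assumes sg: "simple_graph V E" and kc: "k_connected V E 3" and reg: "regular V E \<Delta>"
    and vp: "vpair V E x y"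
    and p\<phi>: "proper_colouring V E (\<Delta>+1) \<phi>" and p\<psi>: "proper_colouring V E (\<Delta>+1) \<psi>"
    and e: "\<phi> x = f" "\<phi> y = f" "\<psi> x = f" "\<psi> y = f"
  shows "reconf_equiv V E (\<Delta>+1) \<phi> \<psi>"
proof -
  have fV: "finite V" and sym: "\<forall>a b. E a b \<longrightarrow> E b a" and irr: "\<forall>a. \<not> E a a"
    and inV: "\<forall>u v. E u v \<longrightarrow> u \<in> V \<and> v \<in> V"
    using sg unfolding simple_graph_def by auto
  have xV: "x \<in> V" "y \<in> V" "x \<noteq> y" "\<not> E x y" using vp unfolding vpair_def by auto
  obtain z where z: "z \<in> V" "E z x" "E z y" using vp unfolding vpair_def by auto
  have fr: "f \<in> {1..\<Delta>+1}" using p\<phi> xV e unfolding proper_colouring_def by auto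
  define U where "U = V - {x,y}"
  define L where "L = (\<lambda>u. {1..\<Delta>+1} - (if E u x \<or> E u y then {f} else {}))"
  have nbU: "nb U E u = nbrs V E u - {x,y}" for u unfolding nb_def nbrs_def U_def by auto
  have cn: "u \<in> V \<Longrightarrow> card (nbrs V E u) = \<Delta>" for u using reg unfolding regular_def by auto
  have fn: "finite (nbrs V E u)" for u using fV unfolding nbrs_def by auto
  have tight: "\<forall>u\<in>U. card (nb U E u) + 1 \<le> card (L u)"
  proof
    fix u assume u: "u \<in> U"
    have uV: "u \<in> V" using u unfolding U_def by simp
    show "card (nb U E u) + 1 \<le> card (L u)"
    proof (cases "E u x \<or> E u y")
      case True
      then have ps: "nbrs V E u - {x,y} \<subset> nbrs V E u" using xV unfolding nbrs_def by auto
      have "card (nbrs V E u - {x,y}) < \<Delta>" using psubset_card_mono[OF fn ps] cn[OF uV] by simp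
      moreover have "card (L u) = \<Delta>" using True fr unfolding L_def by simp
      ultimately show ?thesis unfolding nbU by simp
    next
      case False
      have "card (nbrs V E u - {x,y}) \<le> \<Delta>" using cn[OF uV] card_mono[OF fn[of u], of "nbrs V E u - {x,y}"] by auto
      moreover have "card (L u) = \<Delta> + 1" using False unfolding L_def by simp
      ultimately show ?thesis unfolding nbU by simp
    qed
  qed
  have zU: "z \<in> U" using z irr unfolding U_def by auto
  have slz: "card (nb U E z) + 2 \<le> card (L z)"
  proof -
    have sub: "{x,y} \<subseteq> nbrs V E z" using z xV unfolding nbrs_def by auto
    have "card (nbrs V E z - {x,y}) = \<Delta> - 2" using card_Diff_subset[OF _ sub] cn[OF z(1)] xV by simp
    moreover have "card (nbrs V E z) \<ge> 2" using card_mono[OF fn sub] xV by simp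
    moreover have "card (L z) = \<Delta>" using z fr unfolding L_def by simp
    ultimately show ?thesis unfolding nbU using cn[OF z(1)] by simp
  qed
  have conn: "connected_induced U E"
  proof -
    have "{x,y} \<subseteq> V" "card {x,y} < 3" using xV by auto
    then show ?thesis using kc unfolding k_connected_def U_def by blast
  qed
  have sc: "slackc U E L"
    unfolding slackc_def using fV tight conn zU slz unfolding connected_induced_def U_def by blast
  have lc: "lcol U E L \<phi>" "lcol U E L \<psi>"
    using p\<phi> p\<psi> e unfolding lcol_def proper_colouring_def U_def L_def by ((auto; metis)+)
  have st: "(lstep U E L)\<^sup>*\<^sup>* \<phi> \<psi>" using slack_main[OF sym irr sc lc] .
  define h where "h = (\<lambda>\<gamma> u. if u = x \<or> u = y then f else (\<gamma> u :: nat))"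
  have h\<phi>: "h \<phi> = \<phi>" "h \<psi> = \<psi>" using e unfolding h_def by auto
  have hp: "proper_colouring V E (\<Delta>+1) (h \<gamma>)" if g: "lcol U E L \<gamma>" for \<gamma>
    unfolding proper_colouring_def
  proof (intro conjI ballI allI impI)
    fix v assume "v \<in> V" then show "h \<gamma> v \<in> {1..\<Delta>+1}" using g fr unfolding h_def lcol_def L_def U_def by auto
  next
    fix a b assume ab: "E a b"
    then have abV: "a \<in> V" "b \<in> V" "a \<noteq> b" using inV irr by auto
    have "E b a" using sym ab by blast
    show "h \<gamma> a \<noteq> h \<gamma> b"
      using g ab abV \<open>E b a\<close> xV unfolding h_def lcol_def L_def U_def by (auto; metis Diff_iff empty_iff insert_iff)
  qed
  have "recolour_step V E (\<Delta>+1) (h c) (h d)" if cd: "lstep U E L c d" for c d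
  proof -
    obtain v where v: "\<forall>u\<in>U. u \<noteq> v \<longrightarrow> c u = d u" using cd unfolding lstep_def by blast
    define v' where "v' = (if v \<in> V then v else x)"
    have "v' \<in> V" using xV unfolding v'_def by auto
    moreover have "\<forall>u\<in>V. u \<noteq> v' \<longrightarrow> h c u = h d u" using v unfolding v'_def h_def U_def by auto
    ultimately show ?thesis unfolding recolour_step_def using hp cd unfolding lstep_def by blast
  qed
  then have "(recolour_step V E (\<Delta>+1))\<^sup>*\<^sup>* (h \<phi>) (h \<psi>)" using rtranclp_map[OF st] by blast
  then show ?thesis unfolding reconf_equiv_def h\<phi> .
qed



lemma unfrozen_pair:
  assumes sg: "simple_graph V E" and reg: "regular V E \<Delta>"
    and p: "proper_colouring V E (\<Delta>+1) \<alpha>" and u: "unfrozen V E (\<Delta>+1) \<alpha>"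
  shows "\<exists>x y. vpair V E x y \<and> \<alpha> x = \<alpha> y"
proof -
  have fV: "finite V" using sg unfolding simple_graph_def by auto
  obtain a where a: "a \<in> V" "\<not> frozen V E (\<Delta>+1) \<alpha> a" using u unfolding unfrozen_def by blast
  obtain c where c: "c \<in> {1..\<Delta>+1}" "c \<noteq> \<alpha> a" "\<forall>w\<in>nbrs V E a. \<alpha> w \<noteq> c"
    using a(2) unfolding frozen_def by blast
  let ?N = "nbrs V E a"
  have aa: "\<alpha> a \<in> {1..\<Delta>+1}" using p a unfolding proper_colouring_def by auto
  have sub: "\<alpha> ` ?N \<subseteq> {1..\<Delta>+1} - {\<alpha> a, c}"
    using p c unfolding proper_colouring_def nbrs_def by (auto; metis)
  have cN: "card ?N = \<Delta>" using reg a(1) unfolding regular_def by blast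
  have s2: "{\<alpha> a, c} \<subseteq> {1..\<Delta>+1}" using aa c by auto
  have "card {\<alpha> a, c} = 2" using c by simp
  then have c2: "card ({1..\<Delta>+1} - {\<alpha> a, c}) = \<Delta> + 1 - 2"
    using card_Diff_subset[OF _ s2] by simp
  have two: "card {\<alpha> a, c} \<le> card {1..\<Delta>+1::nat}" using aa c by (intro card_mono) auto
  then have "\<Delta> \<ge> 1" using c by simp
  have "\<not> inj_on \<alpha> ?N"
  proof
    assume "inj_on \<alpha> ?N"
    then have "card (\<alpha> ` ?N) = \<Delta>" using cN card_image by metis
    moreover have "card (\<alpha> ` ?N) \<le> \<Delta> + 1 - 2" using card_mono[OF _ sub] c2 finite_Diff[OF finite_atLeastAtMost[of 1 "\<Delta>+1"]] by simp
    ultimately show False using \<open>\<Delta> \<ge> 1\<close> by simp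
  qed
  then obtain x y where xy: "x \<in> ?N" "y \<in> ?N" "x \<noteq> y" "\<alpha> x = \<alpha> y" unfolding inj_on_def by blast
  have "\<not> E x y" using p xy unfolding proper_colouring_def by auto
  then have "vpair V E x y" using xy a unfolding vpair_def nbrs_def by auto
  then show ?thesis using xy by blast
qed

lemma nbr_pair:
  assumes sg: "simple_graph V E" and kc: "k_connected V E 3" and reg: "regular V E \<Delta>"
    and vp: "vpair V E u1 u2" and xV: "x \<in> V"
  shows "\<exists>r1 r2. vpair V E r1 r2 \<and> E x r1 \<and> E x r2"
proof (rule ccontr)
  assume na: "\<not> ?thesis"
  have fV: "finite V" and sym: "\<forall>a b. E a b \<longrightarrow> E b a" and irr: "\<forall>a. \<not> E a a"
    and inV: "\<forall>u v. E u v \<longrightarrow> u \<in> V \<and> v \<in> V"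
    using sg unfolding simple_graph_def by auto
  let ?N = "nbrs V E x"
  have clique: "\<And>r1 r2. r1 \<in> ?N \<Longrightarrow> r2 \<in> ?N \<Longrightarrow> r1 \<noteq> r2 \<Longrightarrow> E r1 r2"
  proof (rule ccontr)
    fix r1 r2 assume r: "r1 \<in> ?N" "r2 \<in> ?N" "r1 \<noteq> r2" "\<not> E r1 r2"
    then have "vpair V E r1 r2" using xV unfolding vpair_def nbrs_def by auto
    then show False using na r unfolding nbrs_def by auto
  qed
  have cn: "v \<in> V \<Longrightarrow> card (nbrs V E v) = \<Delta>" for v using reg unfolding regular_def by auto
  have fn: "finite (nbrs V E v)" for v using fV unfolding nbrs_def by auto
  define C where "C = insert x ?N"
  have closed: "\<And>a b. a \<in> C \<Longrightarrow> E a b \<Longrightarrow> b \<in> C"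
  proof -
    fix a b assume ab: "a \<in> C" "E a b"
    show "b \<in> C"
    proof (cases "a = x")
      case True then show ?thesis using ab inV unfolding C_def nbrs_def by auto
    next
      case False
      then have aN: "a \<in> ?N" using ab unfolding C_def by auto
      have sub: "insert x (?N - {a}) \<subseteq> nbrs V E a"
      proof
        fix w assume w: "w \<in> insert x (?N - {a})"
        show "w \<in> nbrs V E a"
        proof (cases "w = x")
          case True
          have "E x a" using aN unfolding nbrs_def by simp
          then have "E a x" using sym by blast
          then show ?thesis using True xV unfolding nbrs_def by simp
        next
          case False
          then have "w \<in> ?N" "w \<noteq> a" using w by auto
          then have "E a w" "w \<in> V" using clique[OF aN] unfolding nbrs_def by auto
          then show ?thesis unfolding nbrs_def by simp
        qed
      qed
      have "x \<notin> ?N - {a}" using irr unfolding nbrs_def by auto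
      then have "card (insert x (?N - {a})) = card (?N - {a}) + 1" using fn by simp
      also have "\<dots> = \<Delta>" using aN cn[OF xV] fn[of x] by (simp add: card_Diff_singleton) (metis One_nat_def Suc_pred card_gt_0_iff empty_iff)
      finally have "insert x (?N - {a}) = nbrs V E a"
        using card_subset_eq[OF fn sub] cn aN unfolding nbrs_def by auto
      moreover have "b \<in> nbrs V E a" using ab inV unfolding nbrs_def by auto
      ultimately show ?thesis unfolding C_def by auto
    qed
  qed
  have conn: "connected_induced V E"
  proof -
    have "{} \<subseteq> V" "card {} < (3::nat)" by auto
    then have "connected_induced (V - {}) E" using kc unfolding k_connected_def by blast
    then show ?thesis by simp
  qed
  have reach: "(\<lambda>a b. a \<in> V \<and> b \<in> V \<and> E a b)\<^sup>*\<^sup>* x v \<Longrightarrow> v \<in> C" for v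
  proof (induction rule: rtranclp_induct)
    case base show ?case by (simp add: C_def)
  next
    case (step y z) then show ?case using closed by blast
  qed
  have VC: "V \<subseteq> C" using conn xV reach unfolding connected_induced_def by blast
  have u: "u1 \<in> V" "u2 \<in> V" "u1 \<noteq> u2" "\<not> E u1 u2" using vp unfolding vpair_def by auto
  have "u1 \<in> C" "u2 \<in> C" using VC u by auto
  show False
  proof (cases "u1 = x")
    case True
    then have "u2 \<in> ?N" using \<open>u2 \<in> C\<close> u unfolding C_def by auto
    then show False using True u unfolding nbrs_def by simp
  next
    case False
    then have n1: "u1 \<in> ?N" using \<open>u1 \<in> C\<close> unfolding C_def by auto
    show False
    proof (cases "u2 = x")
      case True
      then have "E x u1" using n1 unfolding nbrs_def by simp
      then have "E u1 u2" using True sym by blast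
      then show False using u by simp
    next
      case False
      then have "u2 \<in> ?N" using \<open>u2 \<in> C\<close> unfolding C_def by auto
      then show False using clique[OF n1] u by blast
    qed
  qed
qed


lemma sg_facts:
  assumes "simple_graph V E"
  shows "finite V" "\<And>a b. E a b \<Longrightarrow> E b a" "\<And>a. \<not> E a a" "\<And>u v. E u v \<Longrightarrow> u \<in> V" "\<And>u v. E u v \<Longrightarrow> v \<in> V"
  using assms unfolding simple_graph_def by blast+

lemma vpair_nb:
  assumes sg: "simple_graph V E" and vp: "vpair V E x y" and t: "t = x \<or> t = y" and e: "E t r"
  shows "r \<noteq> x \<and> r \<noteq> y"
proof -
  have n: "\<not> E x y" using vp unfolding vpair_def by blast
  have n2: "\<not> E y x" using n sg_facts(2)[OF sg] by blast
  show ?thesis using t e n n2 sg_facts(3)[OF sg] by blast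
qed

lemma vpair_Delta:
  assumes sg: "simple_graph V E" and reg: "regular V E \<Delta>" and vp: "vpair V E x y"
  shows "\<Delta> \<ge> 2"
proof -
  obtain z where z: "z \<in> V" "E z x" "E z y" and xy: "x \<in> V" "y \<in> V" "x \<noteq> y"
    using vp unfolding vpair_def by blast
  have sub: "{x,y} \<subseteq> nbrs V E z" using z xy unfolding nbrs_def by auto
  have fn: "finite (nbrs V E z)" using sg_facts(1)[OF sg] unfolding nbrs_def by auto
  have "card {x,y} \<le> card (nbrs V E z)" using card_mono[OF fn sub] .
  moreover have "card (nbrs V E z) = \<Delta>" using reg z(1) unfolding regular_def by blast
  ultimately show ?thesis using xy by simp
qed

lemma two_pairs:
  assumes sg: "simple_graph V E" and reg: "regular V E \<Delta>"
    and v1: "vpair V E x y" and v2: "vpair V E x' y'"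
    and d: "x \<noteq> x'" "x \<noteq> y'" "y \<noteq> x'" "y \<noteq> y'"
    and f: "f \<in> {1..\<Delta>+1}" and g: "g \<in> {1..\<Delta>+1}" and fg: "f \<noteq> g"
  shows "\<exists>\<phi>. proper_colouring V E (\<Delta>+1) \<phi> \<and> \<phi> x = f \<and> \<phi> y = f \<and> \<phi> x' = g \<and> \<phi> y' = g"
proof -
  define F where "F = {x,y,x',y'}"
  define \<phi>0 where "\<phi>0 = (\<lambda>u. if u = x \<or> u = y then f else g)"
  have FV: "F \<subseteq> V" using v1 v2 unfolding vpair_def F_def by auto
  have r: "\<forall>u\<in>F. \<phi>0 u \<in> {1..\<Delta>+1}" using f g unfolding \<phi>0_def by auto
  have n: "\<not> E x y" "\<not> E y x" "\<not> E x' y'" "\<not> E y' x'"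
    using v1 v2 sg_facts(2)[OF sg] unfolding vpair_def by blast+
  have irr: "\<And>a. \<not> E a a" using sg_facts(3)[OF sg] .
  have side: "\<And>a b. a \<in> {x,y} \<Longrightarrow> b \<in> {x,y} \<Longrightarrow> \<not> E a b" using n irr by blast
  have side': "\<And>a b. a \<in> {x',y'} \<Longrightarrow> b \<in> {x',y'} \<Longrightarrow> \<not> E a b" using n irr by blast
  have h1: "\<And>a. a \<in> {x,y} \<Longrightarrow> \<phi>0 a = f" unfolding \<phi>0_def by auto
  have h2: "\<And>a. a \<in> {x',y'} \<Longrightarrow> \<phi>0 a = g" using d unfolding \<phi>0_def by auto
  have p: "\<forall>a\<in>F. \<forall>b\<in>F. E a b \<longrightarrow> \<phi>0 a \<noteq> \<phi>0 b"
  proof (intro ballI impI)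
    fix a b assume ab: "a \<in> F" "b \<in> F" "E a b"
    then have "a \<in> {x,y} \<or> a \<in> {x',y'}" "b \<in> {x,y} \<or> b \<in> {x',y'}" unfolding F_def by auto
    then show "\<phi>0 a \<noteq> \<phi>0 b" using ab(3) by (elim disjE; metis side side' h1 h2 fg)
  qed
  obtain \<phi> where \<phi>: "proper_colouring V E (\<Delta>+1) \<phi>" "\<forall>u\<in>F. \<phi> u = \<phi>0 u"
    using ext_F[OF sg reg FV r p] by blast
  have m: "x \<in> F" "y \<in> F" "x' \<in> F" "y' \<in> F" by (simp_all add: F_def)
  have "\<phi> x = f" "\<phi> y = f" "\<phi> x' = g" "\<phi> y' = g" using \<phi>(2) m h1 h2 by simp_all
  then show ?thesis using \<phi>(1) by blast
qed

lemma Q_link: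
  assumes sg: "simple_graph V E" and kc: "k_connected V E 3" and reg: "regular V E \<Delta>"
    and vp: "vpair V E x y"
    and p\<phi>: "proper_colouring V E (\<Delta>+1) \<phi>" and p\<psi>: "proper_colouring V E (\<Delta>+1) \<psi>"
    and e: "\<phi> x = \<phi> y" "\<psi> x = \<psi> y"
  shows "reconf_equiv V E (\<Delta>+1) \<phi> \<psi>"
proof -
  have xV: "x \<in> V" using vp unfolding vpair_def by blast
  obtain r1 r2 where r: "vpair V E r1 r2" "E x r1" "E x r2" using nbr_pair[OF sg kc reg vp xV] by blast
  have d1: "r1 \<noteq> x \<and> r1 \<noteq> y" using vpair_nb[OF sg vp _ r(2)] by blast
  have d2: "r2 \<noteq> x \<and> r2 \<noteq> y" using vpair_nb[OF sg vp _ r(3)] by blast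
  have D: "\<Delta> \<ge> 2" using vpair_Delta[OF sg reg vp] .
  define f where "f = \<phi> x"
  define f' where "f' = \<psi> x"
  have fr: "f \<in> {1..\<Delta>+1}" "f' \<in> {1..\<Delta>+1}" using p\<phi> p\<psi> xV unfolding proper_colouring_def f_def f'_def by auto
  define g where "g = (if 1 \<noteq> f \<and> 1 \<noteq> f' then 1 else if 2 \<noteq> f \<and> 2 \<noteq> f' then 2 else (3::nat))"
  have g: "g \<noteq> f" "g \<noteq> f'" unfolding g_def by auto
  have gr: "g \<in> {1..\<Delta>+1}" using D unfolding g_def by auto
  obtain \<gamma>1 where \<gamma>1: "proper_colouring V E (\<Delta>+1) \<gamma>1" "\<gamma>1 x = f" "\<gamma>1 y = f" "\<gamma>1 r1 = g" "\<gamma>1 r2 = g"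
  proof -
    have "\<exists>\<gamma>. proper_colouring V E (\<Delta>+1) \<gamma> \<and> \<gamma> x = f \<and> \<gamma> y = f \<and> \<gamma> r1 = g \<and> \<gamma> r2 = g"
      by (rule two_pairs[OF sg reg vp r(1)]) (use d1 d2 g fr gr in auto)
    then show ?thesis using that by blast
  qed
  obtain \<gamma>2 where \<gamma>2: "proper_colouring V E (\<Delta>+1) \<gamma>2" "\<gamma>2 x = f'" "\<gamma>2 y = f'" "\<gamma>2 r1 = g" "\<gamma>2 r2 = g"
  proof -
    have "\<exists>\<gamma>. proper_colouring V E (\<Delta>+1) \<gamma> \<and> \<gamma> x = f' \<and> \<gamma> y = f' \<and> \<gamma> r1 = g \<and> \<gamma> r2 = g"
      by (rule two_pairs[OF sg reg vp r(1)]) (use d1 d2 g fr gr in auto)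
    then show ?thesis using that by blast
  qed
  have ef: "\<phi> x = f" "\<phi> y = f" "\<psi> x = f'" "\<psi> y = f'" using e unfolding f_def f'_def by simp_all
  have s1: "reconf_equiv V E (\<Delta>+1) \<phi> \<gamma>1"
    by (rule K_conn[OF sg kc reg vp p\<phi> \<gamma>1(1) ef(1,2) \<gamma>1(2,3)])
  have s2: "reconf_equiv V E (\<Delta>+1) \<gamma>1 \<gamma>2"
    by (rule K_conn[OF sg kc reg r(1) \<gamma>1(1) \<gamma>2(1) \<gamma>1(4,5) \<gamma>2(4,5)])
  have s3: "reconf_equiv V E (\<Delta>+1) \<gamma>2 \<psi>"
    by (rule K_conn[OF sg kc reg vp \<gamma>2(1) p\<psi> \<gamma>2(2,3) ef(3,4)])
  show ?thesis using s1 s2 s3 unfolding reconf_equiv_def by (meson rtranclp_trans)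
qed

lemma disj_link:
  assumes sg: "simple_graph V E" and kc: "k_connected V E 3" and reg: "regular V E \<Delta>"
    and v1: "vpair V E x y" and v2: "vpair V E x' y'"
    and d: "x \<noteq> x'" "x \<noteq> y'" "y \<noteq> x'" "y \<noteq> y'"
    and p\<phi>: "proper_colouring V E (\<Delta>+1) \<phi>" and p\<psi>: "proper_colouring V E (\<Delta>+1) \<psi>"
    and e: "\<phi> x = \<phi> y" "\<psi> x' = \<psi> y'"
  shows "reconf_equiv V E (\<Delta>+1) \<phi> \<psi>"
proof -
  have xV: "x \<in> V" using v1 unfolding vpair_def by blast
  have D: "\<Delta> \<ge> 2" using vpair_Delta[OF sg reg v1] .
  define f where "f = \<phi> x"
  have fr: "f \<in> {1..\<Delta>+1}" using p\<phi> xV unfolding proper_colouring_def f_def by auto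
  define g where "g = (if f = 1 then 2 else (1::nat))"
  have gr: "g \<in> {1..\<Delta>+1}" "f \<noteq> g" using D unfolding g_def by auto
  obtain \<gamma> where \<gamma>: "proper_colouring V E (\<Delta>+1) \<gamma>" "\<gamma> x = f" "\<gamma> y = f" "\<gamma> x' = g" "\<gamma> y' = g"
    using two_pairs[OF sg reg v1 v2 d fr gr(1) gr(2)] by blast
  have ef: "\<phi> x = f" "\<phi> y = f" using e unfolding f_def by simp_all
  have s1: "reconf_equiv V E (\<Delta>+1) \<phi> \<gamma>"
    by (rule K_conn[OF sg kc reg v1 p\<phi> \<gamma>(1) ef \<gamma>(2,3)])
  have gg: "\<gamma> x' = \<gamma> y'" using \<gamma>(4,5) by simp
  have s2: "reconf_equiv V E (\<Delta>+1) \<gamma> \<psi>"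
    by (rule Q_link[OF sg kc reg v2 \<gamma>(1) p\<psi> gg e(2)])
  show ?thesis using s1 s2 unfolding reconf_equiv_def by (meson rtranclp_trans)
qed

theorem mainTheorem10:
  fixes V :: "'a set" and E :: "'a \<Rightarrow> 'a \<Rightarrow> bool" and \<Delta> :: nat
    and \<alpha> \<beta> :: "'a \<Rightarrow> nat"
  assumes "simple_graph V E"
    and "k_connected V E 3"
    and "regular V E \<Delta>"
    and "proper_colouring V E (\<Delta> + 1) \<alpha>" and "unfrozen V E (\<Delta> + 1) \<alpha>"
    and "proper_colouring V E (\<Delta> + 1) \<beta>" and "unfrozen V E (\<Delta> + 1) \<beta>"
  shows "reconf_equiv V E (\<Delta> + 1) \<alpha> \<beta>"
proof -
  note sg = assms(1) and kc = assms(2) and reg = assms(3)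
  obtain u1 u2 where u: "vpair V E u1 u2" "\<alpha> u1 = \<alpha> u2"
    using unfrozen_pair[OF sg reg assms(4,5)] by blast
  obtain w1 w2 where w: "vpair V E w1 w2" "\<beta> w1 = \<beta> w2"
    using unfrozen_pair[OF sg reg assms(6,7)] by blast
  show ?thesis
  proof (cases "u1 \<noteq> w1 \<and> u1 \<noteq> w2 \<and> u2 \<noteq> w1 \<and> u2 \<noteq> w2")
    case True
    then show ?thesis by (intro disj_link[OF sg kc reg u(1) w(1) _ _ _ _ assms(4) assms(6) u(2) w(2)]) auto
  next
    case False
    then obtain t where t: "t = u1 \<or> t = u2" "t = w1 \<or> t = w2" by blast
    have tV: "t \<in> V" using t u(1) unfolding vpair_def by blast
    obtain r1 r2 where r: "vpair V E r1 r2" "E t r1" "E t r2" using nbr_pair[OF sg kc reg u(1) tV] by blast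
    have a1: "r1 \<noteq> u1 \<and> r1 \<noteq> u2" "r2 \<noteq> u1 \<and> r2 \<noteq> u2"
      using vpair_nb[OF sg u(1) t(1) r(2)] vpair_nb[OF sg u(1) t(1) r(3)] by blast+
    have b1: "r1 \<noteq> w1 \<and> r1 \<noteq> w2" "r2 \<noteq> w1 \<and> r2 \<noteq> w2"
      using vpair_nb[OF sg w(1) t(2) r(2)] vpair_nb[OF sg w(1) t(2) r(3)] by blast+
    have FV: "{r1,r2} \<subseteq> V" using r(1) unfolding vpair_def by blast
    have n: "\<not> E r1 r2" "\<not> E r2 r1" using r(1) sg_facts(2)[OF sg] unfolding vpair_def by blast+
    have p: "\<forall>a\<in>{r1,r2}. \<forall>b\<in>{r1,r2}. E a b \<longrightarrow> (\<lambda>_. 1::nat) a \<noteq> (\<lambda>_. 1::nat) b"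
      using n sg_facts(3)[OF sg] by blast
    have rr: "\<forall>u\<in>{r1,r2}. (\<lambda>_. 1::nat) u \<in> {1..\<Delta>+1}" by simp
    obtain \<gamma> where \<gamma>: "proper_colouring V E (\<Delta>+1) \<gamma>" "\<forall>u\<in>{r1,r2}. \<gamma> u = 1"
      using ext_F[OF sg reg FV rr p] by blast
    have gg: "\<gamma> r1 = \<gamma> r2" using \<gamma>(2) by simp
    have s1: "reconf_equiv V E (\<Delta>+1) \<alpha> \<gamma>"
      by (rule disj_link[OF sg kc reg u(1) r(1) _ _ _ _ assms(4) \<gamma>(1) u(2) gg]) (use a1 in auto)
    have s2: "reconf_equiv V E (\<Delta>+1) \<gamma> \<beta>"
      by (rule disj_link[OF sg kc reg r(1) w(1) _ _ _ _ \<gamma>(1) assms(6) gg w(2)]) (use b1 in auto)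
    show ?thesis using s1 s2 unfolding reconf_equiv_def by (meson rtranclp_trans)
  qed
qed

end
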